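(* Let $\Gamma$ be an imperfect-recall extensive-form game, $i\in\mathcal N$ a player, and $\Gamma'$ a game with the same game tree as $\Gamma$ but potentially different infosets. If $\Gamma'\succeq_i\Gamma$ and player $i$ has perfect recall in $\Gamma'$, then $\Gamma'\succeq_i\mathrm{pr}_i(\Gamma)$. Moreover, player $i$ has perfect recall in $\mathrm{pr}_i(\Gamma)$.
   Context: An extensive-form game consists of a finite rooted tree (node set $\mathcal H$, leaves $\mathcal Z$, actions $A_h$ at nonterminal nodes), a finite set $\mathcal N$ of players plus chance, an assignment of nonterminal nodes to players or chance (with $\mathcal H_i$ the nodes of player $i$), chance distributions, utilities $u_i:\mathcal Z\to\mathbb R_{\ge0}$, and for each $i$ a partition $\mathcal I_i$ of $\mathcal H_i$ into infosets, all nodes of an infoset having the same action set. The game tree consists of $\mathcal H$, actions and chance distributions. For a node $h$ at depth $d$, with root-to-$h$ path $(h_0,\dots,h_{d-1})$ (excluding $h$), $\mathrm{obs}(h)=(i_k,I_k,a_k)_{k=0}^{d-1}$ records the player acting at $h_k$, the infoset of $h_k$ and the action taken; $\mathrm{obs}_i(h)$ is the subsequence with $i_k=i$. Player $i$ has perfect recall if $\mathrm{obs}_i(h)=\mathrm{obs}_i(h')$ for all $I\in\mathcal I_i$ and $h,h'\in I$; a game is imperfect-recall if some player lacks perfect recall. For games $\Gamma,\Gamma'$ with the same game tree and utilities, $\Gamma'\succeq_i\Gamma$ means every infoset of player $i$ in $\Gamma$ is a disjoint union of infosets of player $i$ in $\Gamma'$. $\mathrm{pr}_i(\Gamma)$ is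 the game with the same tree and utilities as $\Gamma$ in which each $I\in\mathcal I_i$ is partitioned into the equivalence classes of $h\sim h'\iff\mathrm{obs}_i(h)=\mathrm{obs}_i(h')$ (obs computed in $\Gamma$), other players' infosets unchanged. *)

theory Defs
  imports Complex_Main
begin

text \<open>Game trees. Nodes are histories, i.e. lists of actions from the root.
  The player function returns Some i for a node of player i and None for a chance node.\<close>

record ('p, 'a) game_tree =
  nodes   :: "'a list set"
  players :: "'p set"
  player  :: "'a list \<Rightarrow> 'p option"
  chance  :: "'a list \<Rightarrow> 'a \<Rightarrow> real"
  util    :: "'p \<Rightarrow> 'a list \<Rightarrow> real"

definition actions :: "('p, 'a) game_tree \<Rightarrow> 'a list \<Rightarrow> 'a set" where
  "actions T h = {a. h @ [a] \<in> nodes T}"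

definition leaves :: "('p, 'a) game_tree \<Rightarrow> 'a list set" where
  "leaves T = {h \<in> nodes T. actions T h = {}}"

definition player_nodes :: "('p, 'a) game_tree \<Rightarrow> 'p \<Rightarrow> 'a list set" where
  "player_nodes T i = {h \<in> nodes T. h \<notin> leaves T \<and> player T h = Some i}"

definition wf_tree :: "('p, 'a) game_tree \<Rightarrow> bool" where
  "wf_tree T \<longleftrightarrow>
     finite (nodes T) \<and> [] \<in> nodes T \<and> finite (players T) \<and>
     (\<forall>h a. h @ [a] \<in> nodes T \<longrightarrow> h \<in> nodes T) \<and>
     (\<forall>h \<in> nodes T - leaves T.
        (case player T h of
           Some i \<Rightarrow> i \<in> players T
         | None \<Rightarrow> (\<forall>a \<in> actions T h. chance T h a \<ge> 0) \<and>
                   (\<Sum>a \<in> actions T h. chance T h a) = 1)) \<and>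
     (\<forall>i \<in> players T. \<forall>z \<in> leaves T. util T i z \<ge> 0)"

type_synonym ('p, 'a) infosets = "'p \<Rightarrow> 'a list set set"

definition wf_game :: "('p, 'a) game_tree \<Rightarrow> ('p, 'a) infosets \<Rightarrow> bool" where
  "wf_game T Is \<longleftrightarrow> wf_tree T \<and>
     (\<forall>i \<in> players T.
        (\<forall>I \<in> Is i. I \<noteq> {}) \<and>
        (\<forall>I \<in> Is i. \<forall>J \<in> Is i. I \<noteq> J \<longrightarrow> I \<inter> J = {}) \<and>
        \<Union>(Is i) = player_nodes T i \<and>
        (\<forall>I \<in> Is i. \<forall>h \<in> I. \<forall>h' \<in> I. actions T h = actions T h'))"

definition infoset_of :: "('p, 'a) game_tree \<Rightarrow> ('p, 'a) infosets \<Rightarrow> 'a list \<Rightarrow> 'a list set option" where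
  "infoset_of T Is h = (case player T h of
      Some i \<Rightarrow> Some (THE I. I \<in> Is i \<and> h \<in> I)
    | None \<Rightarrow> None)"

definition obs :: "('p, 'a) game_tree \<Rightarrow> ('p, 'a) infosets \<Rightarrow> 'a list
                   \<Rightarrow> ('p option \<times> 'a list set option \<times> 'a) list" where
  "obs T Is h = map (\<lambda>k. (player T (take k h), infoset_of T Is (take k h), h ! k)) [0..<length h]"

definition obs_i :: "('p, 'a) game_tree \<Rightarrow> ('p, 'a) infosets \<Rightarrow> 'p \<Rightarrow> 'a list
                   \<Rightarrow> ('p option \<times> 'a list set option \<times> 'a) list" where
  "obs_i T Is i h = filter (\<lambda>(j, _, _). j = Some i) (obs T Is h)"

definition perfect_recall :: "('p, 'a) game_tree \<Rightarrow> ('p, 'a) infosets \<Rightarrow> 'p \<Rightarrow> bool" where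
  "perfect_recall T Is i \<longleftrightarrow>
     (\<forall>I \<in> Is i. \<forall>h \<in> I. \<forall>h' \<in> I. obs_i T Is i h = obs_i T Is i h')"

definition imperfect_recall_game :: "('p, 'a) game_tree \<Rightarrow> ('p, 'a) infosets \<Rightarrow> bool" where
  "imperfect_recall_game T Is \<longleftrightarrow> (\<exists>j \<in> players T. \<not> perfect_recall T Is j)"

text \<open>refines i Is' Is: Gamma' \<succeq>_i Gamma, i.e. every infoset of player i in Gamma
  is a disjoint union of infosets of player i in Gamma'.\<close>

definition refines :: "'p \<Rightarrow> ('p, 'a) infosets \<Rightarrow> ('p, 'a) infosets \<Rightarrow> bool" where
  "refines i Is' Is \<longleftrightarrow>
     (\<forall>I \<in> Is i. \<exists>S \<subseteq> Is' i. pairwise disjnt S \<and> I = \<Union>S)"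

definition pr :: "('p, 'a) game_tree \<Rightarrow> ('p, 'a) infosets \<Rightarrow> 'p \<Rightarrow> ('p, 'a) infosets" where
  "pr T Is i = Is(i := (\<Union>I \<in> Is i.
      {{h' \<in> I. obs_i T Is i h' = obs_i T Is i h} | h. h \<in> I}))"

end

theory Submission
  imports Defs
begin

lemma obs_snoc: "obs T Is (h@[a]) = obs T Is h @ [(player T h, infoset_of T Is h, a)]"
proof -
  have "map (\<lambda>k. (player T (take k (h@[a])), infoset_of T Is (take k (h@[a])), (h@[a]) ! k)) [0..<length h]
      = map (\<lambda>k. (player T (take k h), infoset_of T Is (take k h), h ! k)) [0..<length h]"
    by (rule map_cong) (auto simp: nth_append)
  then show ?thesis unfolding obs_def by simp
qed

lemma obs_i_snoc: "obs_i T Is i (h@[a]) = obs_i T Is i h @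
   (if player T h = Some i then [(player T h, infoset_of T Is h, a)] else [])"
  unfolding obs_i_def by (simp add: obs_snoc)

lemma obs_i_Nil: "obs_i T Is i [] = []"
  unfolding obs_i_def obs_def by simp

lemma transfer:
  assumes pc: "\<forall>h a. h@[a] \<in> nodes T \<longrightarrow> h \<in> nodes T"
    and G: "\<And>p a. p@[a] \<in> nodes T \<Longrightarrow> player T p = Some i \<Longrightarrow>
          infoset_of T Isb p = G (infoset_of T Isa p) (obs_i T Isa i p)"
  shows "h1 \<in> nodes T \<Longrightarrow> h2 \<in> nodes T \<Longrightarrow> obs_i T Isa i h1 = obs_i T Isa i h2
     \<Longrightarrow> obs_i T Isb i h1 = obs_i T Isb i h2"
proof (induction "length h1 + length h2" arbitrary: h1 h2 rule: less_induct)
  case less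
  show ?case
  proof (cases "\<exists>u a. h1 = u@[a] \<and> player T u \<noteq> Some i")
    case True
    then obtain u a where h1: "h1 = u@[a]" and pu: "player T u \<noteq> Some i" by blast
    have "obs_i T Isa i u = obs_i T Isa i h2" using less.prems h1 pu by (simp add: obs_i_snoc)
    moreover have "u \<in> nodes T" using pc less.prems h1 by blast
    ultimately have "obs_i T Isb i u = obs_i T Isb i h2" using less h1 by simp
    then show ?thesis using h1 pu by (simp add: obs_i_snoc)
  next
    case F1: False
    show ?thesis
    proof (cases "\<exists>v b. h2 = v@[b] \<and> player T v \<noteq> Some i")
      case True
      then obtain v b where h2: "h2 = v@[b]" and pv: "player T v \<noteq> Some i" by blast
      have "obs_i T Isa i h1 = obs_i T Isa i v" using less.prems h2 pv by (simp add: obs_i_snoc)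
      moreover have "v \<in> nodes T" using pc less.prems h2 by blast
      ultimately have "obs_i T Isb i h1 = obs_i T Isb i v" using less h2 by simp
      then show ?thesis using h2 pv by (simp add: obs_i_snoc)
    next
      case F2: False
      show ?thesis
      proof (cases h1 rule: rev_exhaust)
        case Nil
        then show ?thesis
        proof (cases h2 rule: rev_exhaust)
          case (snoc v b)
          then have "player T v = Some i" using F2 by blast
          then show ?thesis using less.prems Nil snoc by (simp add: obs_i_snoc obs_i_Nil)
        qed simp
      next
        case (snoc u a)
        then have pu: "player T u = Some i" using F1 by blast
        show ?thesis
        proof (cases h2 rule: rev_exhaust)
          case Nil
          then show ?thesis using less.prems pu snoc by (simp add: obs_i_snoc obs_i_Nil)
        next
          case s2: (snoc v b)
          then have pv: "player T v = Some i" using F2 by blast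
          have e: "obs_i T Isa i u = obs_i T Isa i v" "infoset_of T Isa u = infoset_of T Isa v" "a = b"
            using less.prems(3) snoc s2 pu pv by (simp_all add: obs_i_snoc)
          have un: "u \<in> nodes T" "v \<in> nodes T" using pc less.prems snoc s2 by blast+
          have ih: "obs_i T Isb i u = obs_i T Isb i v" using less.hyps[of u v] un e snoc s2 by simp
          have "infoset_of T Isb u = infoset_of T Isb v"
            using G[of u a] G[of v b] less.prems snoc s2 pu pv e by simp
          then show ?thesis using ih snoc s2 pu pv e by (simp add: obs_i_snoc)
        qed
      qed
    qed
  qed
qed

lemma pc_of: "wf_game T Is \<Longrightarrow> \<forall>h a. h@[a] \<in> nodes T \<longrightarrow> h \<in> nodes T"
  unfolding wf_game_def wf_tree_def by blast

lemma pn_of: assumes "wf_game T Is" "p@[a] \<in> nodes T" "player T p = Some i"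
  shows "p \<in> player_nodes T i"
proof -
  have "p \<in> nodes T" using pc_of[OF assms(1)] assms(2) by blast
  moreover have "a \<in> actions T p" using assms(2) unfolding actions_def by simp
  ultimately show ?thesis using assms(3) unfolding player_nodes_def leaves_def by auto
qed

lemma wf_parts: assumes "wf_game T Is" "i \<in> players T"
  shows "\<forall>I\<in>Is i. I \<noteq> {}" "\<forall>I \<in> Is i. \<forall>J \<in> Is i. I \<noteq> J \<longrightarrow> I \<inter> J = {}"
    "\<Union>(Is i) = player_nodes T i"
proof -
  have "\<forall>i \<in> players T.
        (\<forall>I \<in> Is i. I \<noteq> {}) \<and>
        (\<forall>I \<in> Is i. \<forall>J \<in> Is i. I \<noteq> J \<longrightarrow> I \<inter> J = {}) \<and>
        \<Union>(Is i) = player_nodes T i \<and>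
        (\<forall>I \<in> Is i. \<forall>h \<in> I. \<forall>h' \<in> I. actions T h = actions T h')"
    using assms(1) unfolding wf_game_def by (rule conjunct2)
  then have X: "(\<forall>I \<in> Is i. I \<noteq> {}) \<and>
        (\<forall>I \<in> Is i. \<forall>J \<in> Is i. I \<noteq> J \<longrightarrow> I \<inter> J = {}) \<and>
        \<Union>(Is i) = player_nodes T i \<and>
        (\<forall>I \<in> Is i. \<forall>h \<in> I. \<forall>h' \<in> I. actions T h = actions T h')"
    using assms(2) by (rule bspec)
  show "\<forall>I\<in>Is i. I \<noteq> {}" using X by (rule conjunct1)
  show "\<forall>I \<in> Is i. \<forall>J \<in> Is i. I \<noteq> J \<longrightarrow> I \<inter> J = {}" using X[THEN conjunct2] by (rule conjunct1)
  show "\<Union>(Is i) = player_nodes T i" using X[THEN conjunct2, THEN conjunct2] by (rule conjunct1)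
qed

lemma inf_of: assumes "wf_game T Is" "i \<in> players T" "I \<in> Is i" "p \<in> I"
  shows "infoset_of T Is p = Some I"
proof -
  note P = wf_parts[OF assms(1,2)]
  have "p \<in> \<Union>(Is i)" using assms(3,4) by (rule UnionI)
  then have pn: "p \<in> player_nodes T i" using P(3) by simp
  then have "player T p = Some i" unfolding player_nodes_def by simp
  moreover have "(THE I. I \<in> Is i \<and> p \<in> I) = I"
  proof (rule the_equality)
    show "I \<in> Is i \<and> p \<in> I" using assms(3,4) by (rule conjI)
    fix J assume J: "J \<in> Is i \<and> p \<in> J"
    show "J = I"
    proof (rule ccontr)
      assume "J \<noteq> I"
      then have "J \<inter> I = {}" using P(2) J assms(3) by blast
      then show False using J assms(4) by blast
    qed
  qed
  ultimately show ?thesis unfolding infoset_of_def by simp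
qed

lemma ex_inf: assumes "wf_game T Is" "i \<in> players T" "p \<in> player_nodes T i"
  shows "\<exists>I \<in> Is i. p \<in> I"
proof -
  have "p \<in> \<Union>(Is i)" using wf_parts(3)[OF assms(1,2)] assms(3) by simp
  then show ?thesis by (rule UnionE) (rule bexI)
qed

lemma rf_get: assumes "refines i Is' Is" "I \<in> Is i" shows "\<exists>S. S \<subseteq> Is' i \<and> I = \<Union>S"
proof -
  have "\<exists>S\<subseteq>Is' i. pairwise disjnt S \<and> I = \<Union>S"
    using assms(1)[unfolded refines_def] assms(2) by (rule bspec)
  then obtain S where "S \<subseteq> Is' i" "I = \<Union>S" by (elim exE conjE)
  then show ?thesis by (intro exI[of _ S] conjI)
qed

theorem proposition1:
  fixes T :: "('p, 'a) game_tree" and Is Is' :: "('p, 'a) infosets" and i :: 'p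
  assumes "wf_game T Is"
    and "imperfect_recall_game T Is"
    and "i \<in> players T"
    and "wf_game T Is'"
    and "refines i Is' Is"
    and "perfect_recall T Is' i"
  shows "refines i Is' (pr T Is i) \<and> perfect_recall T (pr T Is i) i"
proof -
  note wf = assms(1) and ip = assms(3) and wf' = assms(4) and rf = assms(5) and pr' = assms(6)
  have pc: "\<forall>h a. h@[a] \<in> nodes T \<longrightarrow> h \<in> nodes T" using pc_of[OF wf] .
  have W: "(\<forall>I \<in> Is i. I \<noteq> {}) \<and>
        (\<forall>I \<in> Is i. \<forall>J \<in> Is i. I \<noteq> J \<longrightarrow> I \<inter> J = {}) \<and>
        \<Union>(Is i) = player_nodes T i"
    using wf_parts[OF wf ip] by (intro conjI)
  have W': "(\<forall>I \<in> Is' i. I \<noteq> {}) \<and>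
        (\<forall>I \<in> Is' i. \<forall>J \<in> Is' i. I \<noteq> J \<longrightarrow> I \<inter> J = {}) \<and>
        \<Union>(Is' i) = player_nodes T i"
    using wf_parts[OF wf' ip] by (intro conjI)
  have disj: "\<And>I J. I \<in> Is i \<Longrightarrow> J \<in> Is i \<Longrightarrow> I \<noteq> J \<Longrightarrow> I \<inter> J = {}"
    using W by simp
  have disj': "\<And>I J. I \<in> Is' i \<Longrightarrow> J \<in> Is' i \<Longrightarrow> I \<noteq> J \<Longrightarrow> I \<inter> J = {}"
    using W' by simp
  have ne': "\<And>I. I \<in> Is' i \<Longrightarrow> I \<noteq> {}" using W' by simp
  have un: "\<Union>(Is i) = player_nodes T i" using W by simp
  have un': "\<Union>(Is' i) = player_nodes T i" using W' by simp
  have sub: "\<And>I'. I' \<in> Is' i \<Longrightarrow> \<exists>I\<in>Is i. I' \<subseteq> I"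
  proof -
    fix I' assume I': "I' \<in> Is' i"
    obtain p where p: "p \<in> I'" using ne'[OF I'] by blast
    have "p \<in> player_nodes T i" using I' p un' by blast
    then obtain I where I: "I \<in> Is i" "p \<in> I" using ex_inf[OF wf ip] by blast
    obtain S where S: "S \<subseteq> Is' i" "I = \<Union>S" using rf_get[OF rf I(1)] by (elim exE conjE)
    then obtain I'' where "I'' \<in> S" "p \<in> I''" using I by blast
    then have "I'' = I'" using disj'[of I'' I'] S I' p by blast
    then show "\<exists>I\<in>Is i. I' \<subseteq> I" using I S \<open>I'' \<in> S\<close> by blast
  qed
  define f where "f I' = (THE I. I \<in> Is i \<and> I' \<subseteq> I)" for I'
  have L1: "\<And>h1 h2. h1 \<in> nodes T \<Longrightarrow> h2 \<in> nodes T \<Longrightarrow> obs_i T Is' i h1 = obs_i T Is' i h2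
     \<Longrightarrow> obs_i T Is i h1 = obs_i T Is i h2"
  proof (rule transfer[OF pc, where G = "\<lambda>x y. map_option f x"])
    fix p a assume pa: "p @ [a] \<in> nodes T" "player T p = Some i"
    have pn: "p \<in> player_nodes T i" using pn_of[OF wf pa] .
    obtain I' where I': "I' \<in> Is' i" "p \<in> I'" using ex_inf[OF wf' ip pn] by blast
    obtain I where I: "I \<in> Is i" "I' \<subseteq> I" using sub I' by blast
    have "f I' = I" unfolding f_def
      by (rule the_equality) (use I I' disj in blast)+
    then show "infoset_of T Is p = map_option f (infoset_of T Is' p)"
      using inf_of[OF wf ip I(1)] inf_of[OF wf' ip I'] I I' by auto
  qed
  have ppr: "pr T Is i i = (\<Union>I \<in> Is i. {{h' \<in> I. obs_i T Is i h' = obs_i T Is i h} | h. h \<in> I})"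
    unfolding pr_def by simp
  have nodesI: "\<And>I h. I \<in> Is i \<Longrightarrow> h \<in> I \<Longrightarrow> h \<in> nodes T"
  proof -
    fix I h assume a: "I \<in> Is i" "h \<in> I"
    then have "h \<in> \<Union>(Is i)" by (rule UnionI)
    then show "h \<in> nodes T" using un unfolding player_nodes_def by simp
  qed
  have part1: "refines i Is' (pr T Is i)"
    unfolding refines_def
  proof
    fix J assume "J \<in> pr T Is i i"
    then obtain I h where I: "I \<in> Is i" "h \<in> I" and J: "J = {h' \<in> I. obs_i T Is i h' = obs_i T Is i h}"
      unfolding ppr by blast
    define S where "S = {I' \<in> Is' i. I' \<subseteq> J}"
    have "S \<subseteq> Is' i" unfolding S_def by blast
    moreover have "pairwise disjnt S" unfolding pairwise_def disjnt_def S_def using disj' by blast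
    moreover have "J = \<Union>S"
    proof
      show "\<Union>S \<subseteq> J" unfolding S_def by blast
      show "J \<subseteq> \<Union>S"
      proof
        fix h' assume h': "h' \<in> J"
        then have h'I: "h' \<in> I" using J by blast
        obtain S0 where S0: "S0 \<subseteq> Is' i" "I = \<Union>S0" using rf_get[OF rf I(1)] by (elim exE conjE)
        then obtain I' where I': "I' \<in> S0" "h' \<in> I'" using h'I by blast
        have "I' \<subseteq> J"
        proof
          fix h'' assume h'': "h'' \<in> I'"
          have I'i: "I' \<in> Is' i" using S0(1) I'(1) by (rule subsetD)
          have "obs_i T Is' i h'' = obs_i T Is' i h'" using pr'[unfolded perfect_recall_def] I'i h'' I'(2) by blast
          moreover have "h'' \<in> I" unfolding S0(2) using I'(1) h'' by (rule UnionI)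
          ultimately have "obs_i T Is i h'' = obs_i T Is i h'" using L1 nodesI[OF I(1)] h'I by blast
          then show "h'' \<in> J" using h' J \<open>h'' \<in> I\<close> by simp
        qed
        then show "h' \<in> \<Union>S" using I' S0 unfolding S_def by blast
      qed
    qed
    ultimately show "\<exists>S\<subseteq>Is' i. pairwise disjnt S \<and> J = \<Union>S" by (intro exI[of _ S] conjI)
  qed
  define G where "G x ob = (case x of Some I \<Rightarrow> Some {h' \<in> I. obs_i T Is i h' = ob} | None \<Rightarrow> None)" for x ob
  have L2: "\<And>h1 h2. h1 \<in> nodes T \<Longrightarrow> h2 \<in> nodes T \<Longrightarrow> obs_i T Is i h1 = obs_i T Is i h2
     \<Longrightarrow> obs_i T (pr T Is i) i h1 = obs_i T (pr T Is i) i h2"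
  proof (rule transfer[OF pc, where G = G])
    fix p a assume pa: "p @ [a] \<in> nodes T" "player T p = Some i"
    have pn: "p \<in> player_nodes T i" using pn_of[OF wf pa] .
    obtain I where I: "I \<in> Is i" "p \<in> I" using ex_inf[OF wf ip pn] by blast
    have "(THE J. J \<in> pr T Is i i \<and> p \<in> J) = {h' \<in> I. obs_i T Is i h' = obs_i T Is i p}"
    proof (rule the_equality)
      show "{h' \<in> I. obs_i T Is i h' = obs_i T Is i p} \<in> pr T Is i i \<and> p \<in> {h' \<in> I. obs_i T Is i h' = obs_i T Is i p}"
        unfolding ppr using I by blast
    next
      fix J assume "J \<in> pr T Is i i \<and> p \<in> J"
      then obtain I2 h where I2: "I2 \<in> Is i" "h \<in> I2" and J: "J = {h' \<in> I2. obs_i T Is i h' = obs_i T Is i h}"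
        and pJ: "p \<in> J" unfolding ppr by blast
      have "I2 = I" using disj I2 I pJ J by blast
      then show "J = {h' \<in> I. obs_i T Is i h' = obs_i T Is i p}" using J pJ by auto
    qed
    then show "infoset_of T (pr T Is i) p = G (infoset_of T Is p) (obs_i T Is i p)"
      using inf_of[OF wf ip I] pa(2) unfolding G_def infoset_of_def by simp
  qed
  have part2: "perfect_recall T (pr T Is i) i"
    unfolding perfect_recall_def
  proof (intro ballI)
    fix J h1 h2 assume "J \<in> pr T Is i i" "h1 \<in> J" "h2 \<in> J"
    then obtain I h where I: "I \<in> Is i" "h \<in> I" and J: "J = {h' \<in> I. obs_i T Is i h' = obs_i T Is i h}"
      unfolding ppr by blast
    then show "obs_i T (pr T Is i) i h1 = obs_i T (pr T Is i) i h2"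
      using L2 nodesI[OF I(1)] \<open>h1 \<in> J\<close> \<open>h2 \<in> J\<close> by auto
  qed
  show ?thesis using part1 part2 by blast
qed

end
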